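(* Let $(X_{1,\infty},f_{1,\infty})$ be a topological nonautonomous dynamical system (each $X_n$ a compact metric space with metric $\varrho_n$, each $f_n:X_n\to X_{n+1}$ continuous) which is equicontinuous, and let $\mu_{1,\infty}=\{\mu_n\}$ be an $f_{1,\infty}$-invariant sequence of Borel probability measures. Then \[ h_{\mathcal{E}_{\mathrm{M}}}(f_{1,\infty}) \le h_{\mathrm{top}}(f_{1,\infty}). \]
   Context: Notation: $f_k^0=\mathrm{id}_{X_k}$, $f_k^n=f_{k+n-1}\circ\cdots\circ f_k$, $f_k^{-n}$ denotes preimage under $f_k^n$. Equicontinuity means: for every $\varepsilon>0$ there is $\delta>0$ such that for all $n$ and $x,y\in X_n$, $\varrho_n(x,y)<\delta$ implies $\varrho_{n+1}(f_n(x),f_n(y))<\varepsilon$. Invariance means $f_n\mu_n=\mu_{n+1}$ (push-forward) for all $n$. Topological entropy: $\varrho_{1,n}(x,y)=\max_{0\le i\le n-1}\varrho_{1+i}(f_1^i x,f_1^i y)$ on $X_1$; a set $E\subset X_1$ is $(n,\varepsilon)$-separated if distinct points have $\varrho_{1,n}$-distance $>\varepsilon$; $r_{\mathrm{sep}}(n,\varepsilon)$ is the maximal cardinality of such a set; $h_{\mathrm{top}}(f_{1,\infty})=\lim_{\varepsilon\searrow 0}\limsup_{n\to\infty}\frac1n\log r_{\mathrm{sep}}(n,\varepsilon)$. Metric entropy: for a finite measurable partition $\mathcal{P}$ of a probability space, $H_\mu(\mathcal{P})=-\sum_{P\in\mathcal{P}}\mu(P)\log\mu(P)$; joins $\mathcal{P}\vee\mathcal{Q}=\{P\cap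 Q\}$. For a sequence $\mathcal{P}_{1,\infty}=\{\mathcal{P}_n\}$ of finite (Borel) partitions of $X_n$, $h(f_{1,\infty};\mathcal{P}_{1,\infty})=\limsup_{n\to\infty}\frac1n H_{\mu_1}\big(\bigvee_{i=0}^{n-1}f_1^{-i}\mathcal{P}_{i+1}\big)$. For a class $\mathcal{E}$ of such sequences, $h_{\mathcal{E}}(f_{1,\infty})=\sup_{\mathcal{P}_{1,\infty}\in\mathcal{E}}h(f_{1,\infty};\mathcal{P}_{1,\infty})$. Misiurewicz class $\mathcal{E}_{\mathrm{M}}$: the set of sequences $\mathcal{P}_{1,\infty}$ of finite Borel partitions $\mathcal{P}_n=\{P_{n,1},\dots,P_{n,k_n}\}$ of $X_n$ with $\sup_n k_n<\infty$ such that for every $\varepsilon>0$ there exist $\delta>0$ and compact sets $C_{n,i}\subset P_{n,i}$ with, for every $n$: (a) $\mu_n(P_{n,i}\setminus C_{n,i})\le\varepsilon$ for all $i$; (b) $\varrho_n(x,y)\ge\delta$ whenever $x\in C_{n,i}$, $y\in C_{n,j}$, $i\ne j$. *)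

theory Defs
  imports "HOL-Analysis.Analysis" "HOL-Probability.Probability"
begin

text \<open>Conventions: indices are shifted to start at 0 (paper's X_1 is X 0 here).
All spaces X n are subsets of one ambient type 'a; d n is the metric on X n.\<close>

definition borel_of :: "'a topology \<Rightarrow> 'a measure" where
  "borel_of T = sigma (topspace T) {U. openin T U}"

definition tnds :: "(nat \<Rightarrow> 'a set) \<Rightarrow> (nat \<Rightarrow> 'a \<Rightarrow> 'a \<Rightarrow> real) \<Rightarrow> (nat \<Rightarrow> 'a \<Rightarrow> 'a) \<Rightarrow> bool" where
  "tnds X d f \<longleftrightarrow> (\<forall>n. Metric_space (X n) (d n)
      \<and> compact_space (Metric_space.mtopology (X n) (d n))
      \<and> continuous_map (Metric_space.mtopology (X n) (d n))
                        (Metric_space.mtopology (X (Suc n)) (d (Suc n))) (f n))"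

definition equicontinuous_nds :: "(nat \<Rightarrow> 'a set) \<Rightarrow> (nat \<Rightarrow> 'a \<Rightarrow> 'a \<Rightarrow> real) \<Rightarrow> (nat \<Rightarrow> 'a \<Rightarrow> 'a) \<Rightarrow> bool" where
  "equicontinuous_nds X d f \<longleftrightarrow> (\<forall>\<epsilon>>0. \<exists>\<delta>>0. \<forall>n. \<forall>x\<in>X n. \<forall>y\<in>X n.
      d n x y < \<delta> \<longrightarrow> d (Suc n) (f n x) (f n y) < \<epsilon>)"

definition invariant_measures :: "(nat \<Rightarrow> 'a set) \<Rightarrow> (nat \<Rightarrow> 'a \<Rightarrow> 'a \<Rightarrow> real) \<Rightarrow> (nat \<Rightarrow> 'a \<Rightarrow> 'a) \<Rightarrow> (nat \<Rightarrow> 'a measure) \<Rightarrow> bool" where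
  "invariant_measures X d f \<mu> \<longleftrightarrow> (\<forall>n. prob_space (\<mu> n)
      \<and> space (\<mu> n) = X n
      \<and> sets (\<mu> n) = sets (borel_of (Metric_space.mtopology (X n) (d n)))
      \<and> distr (\<mu> n) (\<mu> (Suc n)) (f n) = \<mu> (Suc n))"

text \<open>Iterates: comp_seq f i = f (i-1) o ... o f 0 (paper's f_1^i).\<close>
fun comp_seq :: "(nat \<Rightarrow> 'a \<Rightarrow> 'a) \<Rightarrow> nat \<Rightarrow> 'a \<Rightarrow> 'a" where
  "comp_seq f 0 = id"
| "comp_seq f (Suc i) = f i \<circ> comp_seq f i"

definition bowen_dist :: "(nat \<Rightarrow> 'a \<Rightarrow> 'a \<Rightarrow> real) \<Rightarrow> (nat \<Rightarrow> 'a \<Rightarrow> 'a) \<Rightarrow> nat \<Rightarrow> 'a \<Rightarrow> 'a \<Rightarrow> real" where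
  "bowen_dist d f n x y = Max {d i (comp_seq f i x) (comp_seq f i y) | i. i < n}"

definition separated_set :: "(nat \<Rightarrow> 'a set) \<Rightarrow> (nat \<Rightarrow> 'a \<Rightarrow> 'a \<Rightarrow> real) \<Rightarrow> (nat \<Rightarrow> 'a \<Rightarrow> 'a) \<Rightarrow> nat \<Rightarrow> real \<Rightarrow> 'a set \<Rightarrow> bool" where
  "separated_set X d f n \<epsilon> E \<longleftrightarrow> E \<subseteq> X 0 \<and>
      (\<forall>x\<in>E. \<forall>y\<in>E. x \<noteq> y \<longrightarrow> bowen_dist d f n x y > \<epsilon>)"

definition r_sep :: "(nat \<Rightarrow> 'a set) \<Rightarrow> (nat \<Rightarrow> 'a \<Rightarrow> 'a \<Rightarrow> real) \<Rightarrow> (nat \<Rightarrow> 'a \<Rightarrow> 'a) \<Rightarrow> nat \<Rightarrow> real \<Rightarrow> nat" where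
  "r_sep X d f n \<epsilon> = Sup {card E | E. finite E \<and> separated_set X d f n \<epsilon> E}"

definition top_entropy :: "(nat \<Rightarrow> 'a set) \<Rightarrow> (nat \<Rightarrow> 'a \<Rightarrow> 'a \<Rightarrow> real) \<Rightarrow> (nat \<Rightarrow> 'a \<Rightarrow> 'a) \<Rightarrow> ereal" where
  "top_entropy X d f = Lim (at_right (0::real))
     (\<lambda>\<epsilon>. limsup (\<lambda>n. ereal (ln (real (r_sep X d f n \<epsilon>)) / real n)))"

text \<open>Shannon entropy of a finite family (set) of measurable sets; 0 log 0 = 0
(in Isabelle ln 0 = 0).\<close>
definition partition_entropy :: "'a measure \<Rightarrow> 'a set set \<Rightarrow> real" where
  "partition_entropy M \<P> = - (\<Sum>A\<in>\<P>. measure M A * ln (measure M A))"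

definition borel_partition_seq :: "(nat \<Rightarrow> 'a set) \<Rightarrow> (nat \<Rightarrow> 'a \<Rightarrow> 'a \<Rightarrow> real) \<Rightarrow> (nat \<Rightarrow> nat) \<Rightarrow> (nat \<Rightarrow> nat \<Rightarrow> 'a set) \<Rightarrow> bool" where
  "borel_partition_seq X d k P \<longleftrightarrow> (\<forall>n.
      (\<forall>i<k n. P n i \<noteq> {} \<and> P n i \<in> sets (borel_of (Metric_space.mtopology (X n) (d n))))
    \<and> (\<forall>i<k n. \<forall>j<k n. i \<noteq> j \<longrightarrow> P n i \<inter> P n j = {})
    \<and> (\<Union>i<k n. P n i) = X n)"

definition join_partition :: "(nat \<Rightarrow> 'a set) \<Rightarrow> (nat \<Rightarrow> 'a \<Rightarrow> 'a) \<Rightarrow> (nat \<Rightarrow> nat) \<Rightarrow> (nat \<Rightarrow> nat \<Rightarrow> 'a set) \<Rightarrow> nat \<Rightarrow> 'a set set" where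
  "join_partition X f k P n =
     {X 0 \<inter> (\<Inter>i<n. comp_seq f i -` P i (s i)) | s. \<forall>i<n. s i < k i}"

definition metric_entropy_part :: "(nat \<Rightarrow> 'a set) \<Rightarrow> (nat \<Rightarrow> 'a \<Rightarrow> 'a) \<Rightarrow> (nat \<Rightarrow> 'a measure) \<Rightarrow> (nat \<Rightarrow> nat) \<Rightarrow> (nat \<Rightarrow> nat \<Rightarrow> 'a set) \<Rightarrow> ereal" where
  "metric_entropy_part X f \<mu> k P =
     limsup (\<lambda>n. ereal (partition_entropy (\<mu> 0) (join_partition X f k P n) / real n))"

definition misiurewicz_class :: "(nat \<Rightarrow> 'a set) \<Rightarrow> (nat \<Rightarrow> 'a \<Rightarrow> 'a \<Rightarrow> real) \<Rightarrow> (nat \<Rightarrow> 'a measure) \<Rightarrow> ((nat \<Rightarrow> nat) \<times> (nat \<Rightarrow> nat \<Rightarrow> 'a set)) set" where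
  "misiurewicz_class X d \<mu> = {(k, P). borel_partition_seq X d k P
     \<and> (\<exists>K. \<forall>n. k n \<le> K)
     \<and> (\<forall>\<epsilon>>0. \<exists>\<delta>>0. \<exists>C. \<forall>n. \<forall>i<k n.
          C n i \<subseteq> P n i \<and> compactin (Metric_space.mtopology (X n) (d n)) (C n i)
        \<and> measure (\<mu> n) (P n i - C n i) \<le> \<epsilon>
        \<and> (\<forall>j<k n. i \<noteq> j \<longrightarrow> (\<forall>x\<in>C n i. \<forall>y\<in>C n j. d n x y \<ge> \<delta>)))}"

definition class_entropy :: "(nat \<Rightarrow> 'a set) \<Rightarrow> (nat \<Rightarrow> 'a \<Rightarrow> 'a) \<Rightarrow> (nat \<Rightarrow> 'a measure) \<Rightarrow> ((nat \<Rightarrow> nat) \<times> (nat \<Rightarrow> nat \<Rightarrow> 'a set)) set \<Rightarrow> ereal" where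
  "class_entropy X f \<mu> \<E> = (SUP (k, P) \<in> \<E>. metric_entropy_part X f \<mu> k P)"

end

theory Submission
  imports Defs
begin


lemma borel_of_open: "openin T U \<Longrightarrow> U \<in> sets (borel_of T)"
  unfolding borel_of_def by (subst sets_measure_of) (auto dest: openin_subset)

lemma space_borel_of: "space (borel_of T) = topspace T"
  unfolding borel_of_def by (subst space_measure_of) (auto dest: openin_subset)

lemma borel_of_closed: "closedin T U \<Longrightarrow> U \<in> sets (borel_of T)"
proof -
  assume c: "closedin T U"
  then have "topspace T - U \<in> sets (borel_of T)" by (intro borel_of_open) (auto simp: closedin_def)
  then have "space (borel_of T) - (topspace T - U) \<in> sets (borel_of T)" by (rule sets.compl_sets)
  moreover have "space (borel_of T) - (topspace T - U) = U" using c closedin_subset space_borel_of by fastforce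
  ultimately show ?thesis by simp
qed

lemma continuous_borel_measurable:
  assumes "continuous_map T U g"
  shows "g \<in> measurable (borel_of T) (borel_of U)"
proof -
  have "g \<in> measurable (borel_of T) (sigma (topspace U) {V. openin U V})"
    unfolding borel_of_def[of T]
  proof (rule measurable_measure_of)
    show "{V. openin U V} \<subseteq> Pow (topspace U)" by (auto dest: openin_subset)
    show "g \<in> space (sigma (topspace T) {U. openin T U}) \<rightarrow> topspace U"
      using assms space_borel_of[of T] unfolding borel_of_def continuous_map_def by auto
    fix V assume "V \<in> {V. openin U V}"
    then have "openin T {x \<in> topspace T. g x \<in> V}" using assms unfolding continuous_map_def by auto
    moreover have "g -` V \<inter> space (sigma (topspace T) {U. openin T U}) = {x \<in> topspace T. g x \<in> V}"
      using space_borel_of[of T] unfolding borel_of_def by auto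
    ultimately show "g -` V \<inter> space (sigma (topspace T) {U. openin T U}) \<in> sets (sigma (topspace T) {U. openin T U})"
      using borel_of_open[of T] unfolding borel_of_def by auto
  qed
  then show ?thesis unfolding borel_of_def .
qed

locale sys =
  fixes X :: "nat \<Rightarrow> 'a set" and d :: "nat \<Rightarrow> 'a \<Rightarrow> 'a \<Rightarrow> real"
    and f :: "nat \<Rightarrow> 'a \<Rightarrow> 'a" and \<mu> :: "nat \<Rightarrow> 'a measure"
  assumes tn: "tnds X d f" and inv: "invariant_measures X d f \<mu>"
begin

abbreviation "MT i \<equiv> Metric_space.mtopology (X i) (d i)"
abbreviation "c i \<equiv> comp_seq f i"

lemma ms: "Metric_space (X n) (d n)" using tn unfolding tnds_def by auto
lemma cpt: "compact_space (MT n)" using tn unfolding tnds_def by auto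
lemma fcont: "continuous_map (MT n) (MT (Suc n)) (f n)" using tn unfolding tnds_def by auto
lemma prob: "prob_space (\<mu> n)" using inv unfolding invariant_measures_def by auto
lemma space_mu: "space (\<mu> n) = X n" using inv unfolding invariant_measures_def by auto
lemma sets_mu: "sets (\<mu> n) = sets (borel_of (MT n))" using inv unfolding invariant_measures_def by auto
lemma distr_mu: "distr (\<mu> n) (\<mu> (Suc n)) (f n) = \<mu> (Suc n)" using inv unfolding invariant_measures_def by auto
lemma topspace_MT: "topspace (MT n) = X n" using Metric_space.topspace_mtopology[OF ms] .

lemma c_cont: "continuous_map (MT 0) (MT i) (c i)"
proof (induction i)
  case 0 then show ?case by simp
next
  case (Suc i) then show ?case using continuous_map_compose[OF Suc.IH fcont[of i]] by (simp add: comp_def)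
qed

lemma c_in: "x \<in> X 0 \<Longrightarrow> c i x \<in> X i"
  using c_cont[of i] topspace_MT unfolding continuous_map_def by fastforce

lemma meas_mu: "continuous_map (MT a) (MT b) g \<Longrightarrow> g \<in> measurable (\<mu> a) (\<mu> b)"
  using continuous_borel_measurable[of "MT a" "MT b" g]
  by (simp add: measurable_cong_sets[OF sets_mu sets_mu])

lemma c_meas: "c i \<in> measurable (\<mu> 0) (\<mu> i)" using meas_mu[OF c_cont] .

lemma c_inv: "A \<in> sets (\<mu> i) \<Longrightarrow> measure (\<mu> 0) (c i -` A \<inter> X 0) = measure (\<mu> i) A"
proof (induction i arbitrary: A)
  case 0 then show ?case using sets.sets_into_space[OF 0] space_mu[of 0] by (simp add: Int_absorb2)
next
  case (Suc i)
  have fm: "f i \<in> measurable (\<mu> i) (\<mu> (Suc i))" using meas_mu[OF fcont] .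
  have B: "f i -` A \<inter> X i \<in> sets (\<mu> i)" using measurable_sets[OF fm Suc.prems] space_mu by simp
  have "c (Suc i) -` A \<inter> X 0 = c i -` (f i -` A \<inter> X i) \<inter> X 0" using c_in by auto
  then have "measure (\<mu> 0) (c (Suc i) -` A \<inter> X 0) = measure (\<mu> i) (f i -` A \<inter> X i)"
    using Suc.IH[OF B] by simp
  also have "\<dots> = measure (distr (\<mu> i) (\<mu> (Suc i)) (f i)) A"
    using measure_distr[OF fm Suc.prems] space_mu by simp
  finally show ?case using distr_mu by (simp add: comp_def)
qed

end

context sys begin

lemma dsym: "x \<in> X i \<Longrightarrow> y \<in> X i \<Longrightarrow> d i x y = d i y x" using Metric_space.commute[OF ms] by blast
lemma dzero: "x \<in> X i \<Longrightarrow> d i x x = 0" using Metric_space.mdist_zero[OF ms] by blast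
lemma dtri: "x \<in> X i \<Longrightarrow> y \<in> X i \<Longrightarrow> z \<in> X i \<Longrightarrow> d i x z \<le> d i x y + d i y z"
  using Metric_space.triangle[OF ms] by blast

lemma X0_ne: "X 0 \<noteq> {}" using prob_space.not_empty[OF prob[of 0]] space_mu by simp

lemma bowen_ge: "i < N \<Longrightarrow> d i (c i x) (c i y) \<le> bowen_dist d f N x y"
  unfolding bowen_dist_def by (rule Max_ge) auto

lemma bowen_sym: "x \<in> X 0 \<Longrightarrow> y \<in> X 0 \<Longrightarrow> bowen_dist d f N x y = bowen_dist d f N y x"
proof -
  assume "x \<in> X 0" "y \<in> X 0"
  then have "{d i (c i x) (c i y) |i. i < N} = {d i (c i y) (c i x) |i. i < N}"
    using dsym c_in by metis
  then show ?thesis unfolding bowen_dist_def by simp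
qed

lemma sep_bounded:
  assumes N: "N \<ge> 1" and e: "\<epsilon> > 0"
  shows "\<exists>B. \<forall>E. finite E \<and> separated_set X d f N \<epsilon> E \<longrightarrow> card E \<le> B"
proof -
  define U where "U x = (\<Inter>i\<in>{..<N}. {y \<in> topspace (MT 0). c i y \<in> Metric_space.mball (X i) (d i) (c i x) (\<epsilon>/2)}) \<inter> topspace (MT 0)" for x
  have op: "openin (MT 0) (U x)" for x
    unfolding U_def
    by (rule openin_INT) (auto intro!: openin_continuous_map_preimage[OF c_cont] Metric_space.openin_mball[OF ms])
  have U: "y \<in> U x \<longleftrightarrow> y \<in> X 0 \<and> (\<forall>i<N. c i x \<in> X i \<and> d i (c i x) (c i y) < \<epsilon>/2)" for x y
    unfolding U_def topspace_MT using Metric_space.in_mball[OF ms] c_in by auto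
  have cov: "X 0 \<subseteq> \<Union>(U ` X 0)"
  proof
    fix x assume x: "x \<in> X 0"
    then have "x \<in> U x" using U c_in dzero e by auto
    then show "x \<in> \<Union>(U ` X 0)" using x by blast
  qed
  obtain F where F: "finite F" "F \<subseteq> U ` X 0" "X 0 \<subseteq> \<Union>F"
    using cpt[of 0] cov op unfolding compact_space_def compactin_def topspace_MT by (metis imageE)
  have "card E \<le> card F" if E: "finite E" "separated_set X d f N \<epsilon> E" for E
  proof -
    have EX: "E \<subseteq> X 0" using E unfolding separated_set_def by auto
    define g where "g x = (SOME V. V \<in> F \<and> x \<in> V)" for x
    have g: "g x \<in> F \<and> x \<in> g x" if "x \<in> E" for x
      unfolding g_def by (rule someI_ex) (use that EX F(3) in blast)
    have "inj_on g E"
    proof (rule inj_onI, rule ccontr)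
      fix x y assume xy: "x \<in> E" "y \<in> E" "g x = g y" "x \<noteq> y"
      then obtain z where z: "z \<in> X 0" "g x = U z" using g F(2) by blast
      have "x \<in> U z" "y \<in> U z" using g xy z by metis+
      then have "d i (c i x) (c i y) < \<epsilon>" if "i < N" for i
      proof -
        have "d i (c i z) (c i x) < \<epsilon>/2" "d i (c i z) (c i y) < \<epsilon>/2" "c i z \<in> X i"
          using \<open>x \<in> U z\<close> \<open>y \<in> U z\<close> U that by auto
        moreover have "c i x \<in> X i" "c i y \<in> X i" using xy EX c_in by auto
        ultimately show ?thesis using dtri[of "c i x" i "c i z" "c i y"] dsym[of "c i x" i "c i z"] by linarith
      qed
      then have "bowen_dist d f N x y < \<epsilon>"
        unfolding bowen_dist_def using N
        by (subst Max_less_iff) (auto intro!: exI[of _ 0])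
      moreover have "bowen_dist d f N x y > \<epsilon>" using E xy unfolding separated_set_def by auto
      ultimately show False by simp
    qed
    moreover have "g ` E \<subseteq> F" using g by auto
    ultimately show ?thesis using card_inj_on_le F(1) by blast
  qed
  then show ?thesis by blast
qed

lemma rsep_max:
  assumes N: "N \<ge> 1" and e: "\<epsilon> > 0"
  shows "\<exists>E. finite E \<and> separated_set X d f N \<epsilon> E \<and> card E = r_sep X d f N \<epsilon>
     \<and> (\<forall>x\<in>X 0. \<exists>e\<in>E. \<forall>i<N. d i (c i x) (c i e) \<le> \<epsilon>)"
proof -
  define S where "S = {card E | E. finite E \<and> separated_set X d f N \<epsilon> E}"
  obtain B where B: "\<And>E. finite E \<Longrightarrow> separated_set X d f N \<epsilon> E \<Longrightarrow> card E \<le> B"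
    using sep_bounded[OF N e] by blast
  have Sne: "S \<noteq> {}" unfolding S_def separated_set_def by auto
  have Sfin: "finite S" using B unfolding S_def by (intro finite_nat_set_iff_bounded_le[THEN iffD2]) auto
  have "r_sep X d f N \<epsilon> = Max S" unfolding r_sep_def S_def[symmetric] Sup_nat_def using Sne by simp
  moreover have "Max S \<in> S" using Sne Sfin by simp
  ultimately obtain E where E: "finite E" "separated_set X d f N \<epsilon> E" "card E = r_sep X d f N \<epsilon>"
    unfolding S_def by auto
  have EX: "E \<subseteq> X 0" using E unfolding separated_set_def by auto
  have "\<exists>e\<in>E. \<forall>i<N. d i (c i x) (c i e) \<le> \<epsilon>" if x: "x \<in> X 0" for x
  proof (rule ccontr)
    assume "\<not> ?thesis"
    then have far: "\<forall>e\<in>E. \<exists>i<N. d i (c i x) (c i e) > \<epsilon>" by (auto simp: not_le)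
    then have xE: "x \<notin> E" using x dzero c_in e by fastforce
    have "separated_set X d f N \<epsilon> (insert x E)"
      unfolding separated_set_def
    proof (intro conjI ballI impI)
      show "insert x E \<subseteq> X 0" using x EX by auto
      fix y z assume yz: "y \<in> insert x E" "z \<in> insert x E" "y \<noteq> z"
      have bx: "bowen_dist d f N x e > \<epsilon>" if "e \<in> E" for e
        using far that bowen_ge by (meson less_le_trans)
      show "\<epsilon> < bowen_dist d f N y z"
        using yz E(2) bx bowen_sym x EX unfolding separated_set_def by (metis insert_iff subsetD)
    qed
    then have "card (insert x E) \<in> S" unfolding S_def using E(1) by blast
    then have "card (insert x E) \<le> Max S" using Sfin by simp
    then show False using E xE \<open>r_sep X d f N \<epsilon> = Max S\<close> by simp
  qed
  then show ?thesis using E by blast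
qed

lemma rsep_pos: "N \<ge> 1 \<Longrightarrow> \<epsilon> > 0 \<Longrightarrow> r_sep X d f N \<epsilon> \<ge> 1"
proof -
  assume a: "N \<ge> 1" "\<epsilon> > 0"
  obtain E where E: "finite E" "card E = r_sep X d f N \<epsilon>" "\<forall>x\<in>X 0. \<exists>e\<in>E. \<forall>i<N. d i (c i x) (c i e) \<le> \<epsilon>"
    using rsep_max[OF a] by blast
  then have "E \<noteq> {}" using X0_ne by auto
  then show ?thesis using E by (metis One_nat_def Suc_leI card_gt_0_iff)
qed

lemma rsep_anti:
  assumes N: "N \<ge> 1" and e: "0 < \<epsilon>'" "\<epsilon>' \<le> \<epsilon>"
  shows "r_sep X d f N \<epsilon> \<le> r_sep X d f N \<epsilon>'"
proof -
  obtain B where B: "\<And>E. finite E \<Longrightarrow> separated_set X d f N \<epsilon>' E \<Longrightarrow> card E \<le> B"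
    using sep_bounded[OF N e(1)] by blast
  have sub: "{card E | E. finite E \<and> separated_set X d f N \<epsilon> E} \<subseteq> {card E | E. finite E \<and> separated_set X d f N \<epsilon>' E}"
    unfolding separated_set_def using e by fastforce
  show ?thesis unfolding r_sep_def
  proof (rule cSup_subset_mono)
    show "{card E | E. finite E \<and> separated_set X d f N \<epsilon> E} \<noteq> {}"
      by (auto simp: separated_set_def intro!: exI[of _ "{}"])
    show "bdd_above {card E | E. finite E \<and> separated_set X d f N \<epsilon>' E}"
      using B by (auto simp: bdd_above_def intro!: exI[of _ B])
  qed (rule sub)
qed

definition "gg \<epsilon> = limsup (\<lambda>n. ereal (ln (real (r_sep X d f n \<epsilon>)) / real n))"

lemma gg_anti: "0 < \<epsilon>' \<Longrightarrow> \<epsilon>' \<le> \<epsilon> \<Longrightarrow> gg \<epsilon> \<le> gg \<epsilon>'"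
  unfolding gg_def
proof (rule Limsup_mono, rule always_eventually, rule allI)
  fix n assume e: "0 < \<epsilon>'" "\<epsilon>' \<le> \<epsilon>"
  show "ereal (ln (real (r_sep X d f n \<epsilon>)) / real n) \<le> ereal (ln (real (r_sep X d f n \<epsilon>')) / real n)"
  proof (cases "n = 0")
    case False
    then have n: "n \<ge> 1" by simp
    have "1 \<le> r_sep X d f n \<epsilon>" using rsep_pos[OF n] e by simp
    then have "ln (real (r_sep X d f n \<epsilon>)) \<le> ln (real (r_sep X d f n \<epsilon>'))"
      using rsep_anti[OF n e] by simp
    then show ?thesis by (simp add: divide_right_mono)
  qed simp
qed

lemma top_eq: "top_entropy X d f = (SUP \<epsilon>\<in>{0<..}. gg \<epsilon>)"
proof -
  have lim: "(gg \<longlongrightarrow> (SUP \<epsilon>\<in>{0<..}. gg \<epsilon>)) (at_right 0)"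
  proof (rule order_tendstoI)
    fix a assume "a < (SUP \<epsilon>\<in>{0<..}. gg \<epsilon>)"
    then obtain e0 where e0: "e0 > 0" "a < gg e0" by (auto simp: less_SUP_iff)
    show "\<forall>\<^sub>F x in at_right 0. a < gg x"
      unfolding eventually_at_right_field using e0 gg_anti
      by (intro exI[of _ e0]) (auto intro: less_le_trans)
  next
    fix a assume a: "(SUP \<epsilon>\<in>{0<..}. gg \<epsilon>) < a"
    show "\<forall>\<^sub>F x in at_right 0. gg x < a"
      unfolding eventually_at_right_field
      by (intro exI[of _ 1]) (auto intro!: le_less_trans[OF _ a] SUP_upper)
  qed
  have "top_entropy X d f = Lim (at_right 0) gg" unfolding top_entropy_def gg_def ..
  also have "\<dots> = (SUP \<epsilon>\<in>{0<..}. gg \<epsilon>)" by (rule tendsto_Lim[OF _ lim]) simp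
  finally show ?thesis .
qed

lemma gg_le_top: "\<epsilon> > 0 \<Longrightarrow> gg \<epsilon> \<le> top_entropy X d f"
  unfolding top_eq by (rule SUP_upper) simp

end



lemma fv_integral:
  fixes h :: "'a \<Rightarrow> 'v" and F :: "'v \<Rightarrow> real"
  assumes P: "prob_space M" and fin: "finite (h ` space M)"
    and ms: "\<And>v. v \<in> h ` space M \<Longrightarrow> h -` {v} \<inter> space M \<in> sets M"
  shows "integrable M (\<lambda>x. F (h x))"
    "integral\<^sup>L M (\<lambda>x. F (h x)) = (\<Sum>v\<in>h ` space M. F v * measure M (h -` {v} \<inter> space M))"
proof -
  interpret prob_space M by fact
  have eq: "F (h x) = (\<Sum>v\<in>h ` space M. F v * indicator (h -` {v} \<inter> space M) x)" if x: "x \<in> space M" for x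
  proof -
    have "(\<Sum>v\<in>h ` space M. F v * indicator (h -` {v} \<inter> space M) x) = (\<Sum>v\<in>{h x}. F v * indicator (h -` {v} \<inter> space M) x)"
      by (rule sum.mono_neutral_right) (use fin x in \<open>auto simp: indicator_def\<close>)
    then show ?thesis using x by (simp add: indicator_def)
  qed
  have indint: "integrable M (indicator (h -` {v} \<inter> space M) :: 'a \<Rightarrow> real)" if v: "v \<in> h ` space M" for v
      using ms[OF v] by (intro integrable_real_indicator) (auto simp: emeasure_finite less_top[symmetric])
  have int: "integrable M (\<lambda>x. \<Sum>v\<in>h ` space M. F v * indicator (h -` {v} \<inter> space M) x)"
  proof (rule Bochner_Integration.integrable_sum)
    fix v assume v: "v \<in> h ` space M"
    have "integrable M (indicator (h -` {v} \<inter> space M) :: 'a \<Rightarrow> real)"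
      using ms[OF v] by (intro integrable_real_indicator) (auto simp: emeasure_finite less_top[symmetric])
    then show "integrable M (\<lambda>x. F v * indicator (h -` {v} \<inter> space M) x)" by (rule integrable_mult_right)
  qed
  have "integrable M (\<lambda>x. F (h x)) \<longleftrightarrow> integrable M (\<lambda>x. \<Sum>v\<in>h ` space M. F v * indicator (h -` {v} \<inter> space M) x)"
    by (rule Bochner_Integration.integrable_cong) (auto simp: eq)
  then show "integrable M (\<lambda>x. F (h x))" using int by simp
  have "integral\<^sup>L M (\<lambda>x. F (h x)) = integral\<^sup>L M (\<lambda>x. \<Sum>v\<in>h ` space M. F v * indicator (h -` {v} \<inter> space M) x)"
    by (rule Bochner_Integration.integral_cong) (simp_all add: eq)
  also have "\<dots> = (\<Sum>v\<in>h ` space M. F v * measure M (h -` {v} \<inter> space M))"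
    using ms indint by (subst Bochner_Integration.integral_sum) (auto intro!: sum.cong simp: Int_absorb2)
  finally show "integral\<^sup>L M (\<lambda>x. F (h x)) = (\<Sum>v\<in>h ` space M. F v * measure M (h -` {v} \<inter> space M))" .
qed

locale part = sys X d f \<mu> for X :: "nat \<Rightarrow> 'a set" and d f \<mu> +
  fixes k :: "nat \<Rightarrow> nat" and P :: "nat \<Rightarrow> nat \<Rightarrow> 'a set" and K :: nat and \<epsilon> \<delta> :: real
    and C :: "nat \<Rightarrow> nat \<Rightarrow> 'a set" and m N :: nat
  assumes bp: "borel_partition_seq X d k P" and kK: "\<And>n. k n \<le> K" and K1: "K \<ge> 1"
    and epos: "\<epsilon> > 0" and dpos: "\<delta> > 0"
    and Csub: "\<And>n i. i < k n \<Longrightarrow> C n i \<subseteq> P n i"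
    and Ccpt: "\<And>n i. i < k n \<Longrightarrow> compactin (MT n) (C n i)"
    and Cmeas: "\<And>n i. i < k n \<Longrightarrow> measure (\<mu> n) (P n i - C n i) \<le> \<epsilon>"
    and Csep: "\<And>n i j x y. i < k n \<Longrightarrow> j < k n \<Longrightarrow> i \<noteq> j \<Longrightarrow> x \<in> C n i \<Longrightarrow> y \<in> C n j \<Longrightarrow> d n x y \<ge> \<delta>"
    and m1: "m \<ge> 1" and N1: "N \<ge> 1"
begin

lemma P_sets: "a < k n \<Longrightarrow> P n a \<in> sets (\<mu> n)" using bp sets_mu unfolding borel_partition_seq_def by auto
lemma P_disj: "a < k n \<Longrightarrow> b < k n \<Longrightarrow> a \<noteq> b \<Longrightarrow> P n a \<inter> P n b = {}" using bp unfolding borel_partition_seq_def by auto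
lemma P_cover: "(\<Union>a<k n. P n a) = X n" using bp unfolding borel_partition_seq_def by auto
lemma C_sets: "a < k n \<Longrightarrow> C n a \<in> sets (\<mu> n)"
  using borel_of_closed[OF compactin_imp_closedin[OF Metric_space.Hausdorff_space_mtopology[OF ms] Ccpt]] sets_mu by auto
lemma P_sub: "a < k n \<Longrightarrow> P n a \<subseteq> X n" using P_cover by auto

definition "sidx i x = (SOME a. a < k i \<and> c i x \<in> P i a)"
definition "good i x \<longleftrightarrow> (\<exists>a<k i. c i x \<in> C i a)"
definition "bgood j x \<longleftrightarrow> (\<forall>i<N. i div m = j \<longrightarrow> good i x)"
definition "S x = restrict (\<lambda>i. sidx i x) {..<N}"
definition "tt x = restrict (\<lambda>i. if bgood (i div m) x then Some (sidx i x) else None) {..<N}"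
definition "T = tt ` X 0"
definition "atom s = X 0 \<inter> (\<Inter>i<N. c i -` P i (s i))"

lemma sidx: "x \<in> X 0 \<Longrightarrow> sidx i x < k i \<and> c i x \<in> P i (sidx i x)"
proof -
  assume x: "x \<in> X 0"
  then have "\<exists>a. a < k i \<and> c i x \<in> P i a" using c_in P_cover[of i] by blast
  then show ?thesis unfolding sidx_def by (rule someI_ex)
qed

lemma sidx_uniq: "x \<in> X 0 \<Longrightarrow> a < k i \<Longrightarrow> c i x \<in> P i a \<Longrightarrow> sidx i x = a"
  using sidx P_disj by blast

lemma atom_S: "x \<in> X 0 \<Longrightarrow> atom (S x) = {y \<in> X 0. S y = S x}"
proof -
  assume x: "x \<in> X 0"
  have "y \<in> atom (S x) \<longleftrightarrow> y \<in> X 0 \<and> S y = S x" for y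
  proof
    assume y: "y \<in> atom (S x)"
    then have "y \<in> X 0" unfolding atom_def by auto
    moreover have "sidx i y = sidx i x" if "i < N" for i
      using y that sidx_uniq[OF \<open>y \<in> X 0\<close>, of "sidx i x" i] sidx[OF x, of i] unfolding atom_def S_def by auto
    ultimately show "y \<in> X 0 \<and> S y = S x" unfolding S_def by (auto intro!: restrict_ext)
  next
    assume "y \<in> X 0 \<and> S y = S x"
    then have y0: "y \<in> X 0" and Sy: "S y = S x" by auto
    have "sidx i y = sidx i x" if "i < N" for i using fun_cong[OF Sy, of i] that by (simp add: S_def)
    then have "c i y \<in> P i (sidx i x)" if "i < N" for i using sidx[OF y0, of i] that by simp
    then show "y \<in> atom (S x)" unfolding atom_def S_def using y0 by auto
  qed
  then show ?thesis by auto
qed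

lemma S_pre: "s \<in> S ` X 0 \<Longrightarrow> S -` {s} \<inter> X 0 = atom s"
  using atom_S by auto

lemma atom_sets: "x \<in> X 0 \<Longrightarrow> atom (S x) \<in> sets (\<mu> 0)"
proof -
  assume x: "x \<in> X 0"
  have "atom (S x) = (\<Inter>i\<in>{..<N}. c i -` P i (sidx i x) \<inter> space (\<mu> 0))"
  proof -
    have "0 \<in> {..<N}" using N1 by simp
    then have N0: "{..<N} \<noteq> {}" by blast
    show ?thesis unfolding atom_def S_def space_mu using N0 by auto
  qed
  also have "\<dots> \<in> sets (\<mu> 0)"
  proof (rule sets.finite_INT)
    show "{..<N} \<noteq> {}" using N1 by (metis lessThan_iff less_le_trans zero_less_one empty_iff)
  qed (auto intro!: measurable_sets[OF c_meas] P_sets sidx[OF x, THEN conjunct1])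
  finally show ?thesis .
qed

lemma S_fin: "finite (S ` X 0)"
proof (rule finite_subset)
  show "S ` X 0 \<subseteq> PiE {..<N} (\<lambda>i. {..<k i})"
  proof
    fix s assume "s \<in> S ` X 0"
    then obtain x where x: "x \<in> X 0" "s = S x" by auto
    have "S x \<in> PiE {..<N} (\<lambda>i. {..<k i})" unfolding S_def
      by (rule restrict_PiE_iff[THEN iffD2]) (use sidx[OF x(1)] in auto)
    then show "s \<in> PiE {..<N} (\<lambda>i. {..<k i})" using x by simp
  qed
qed (auto intro: finite_PiE)

lemma T_fin: "finite T"
proof (rule finite_subset)
  show "T \<subseteq> PiE {..<N} (\<lambda>i. insert None (Some ` {..<k i}))"
  proof
    fix s assume "s \<in> T"
    then obtain x where x: "x \<in> X 0" "s = tt x" by (auto simp: T_def)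
    have "tt x \<in> PiE {..<N} (\<lambda>i. insert None (Some ` {..<k i}))" unfolding tt_def
      by (rule restrict_PiE_iff[THEN iffD2]) (use sidx[OF x(1)] in auto)
    then show "s \<in> PiE {..<N} (\<lambda>i. insert None (Some ` {..<k i}))" using x by simp
  qed
qed (auto intro: finite_PiE)

lemma T_ne: "T \<noteq> {}" unfolding T_def using X0_ne by auto

end


lemma gibbs:
  fixes p w :: "'i \<Rightarrow> real"
  assumes "finite I" "\<And>i. i\<in>I \<Longrightarrow> p i \<ge> 0" "sum p I = 1"
    "\<And>i. i\<in>I \<Longrightarrow> w i > 0" "sum w I \<le> 1"
  shows "- (\<Sum>i\<in>I. p i * ln (p i)) \<le> - (\<Sum>i\<in>I. p i * ln (w i))"
proof -
  have "p i * ln (w i) - p i * ln (p i) \<le> w i - p i" if "i\<in>I" for i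
  proof (cases "p i = 0")
    case True then show ?thesis using assms(4)[OF that] by simp
  next
    case False
    then have pp: "p i > 0" using assms(2)[OF that] by simp
    have "ln (w i / p i) \<le> w i / p i - 1" using ln_le_minus_one pp assms(4)[OF that] by simp
    then have "p i * ln (w i / p i) \<le> p i * (w i / p i - 1)" using pp by (simp add: mult_left_mono)
    moreover have "ln (w i / p i) = ln (w i) - ln (p i)" using pp assms(4)[OF that] by (simp add: ln_div)
    ultimately show ?thesis using pp by (simp add: algebra_simps)
  qed
  then have "(\<Sum>i\<in>I. p i * ln (w i) - p i * ln (p i)) \<le> (\<Sum>i\<in>I. w i - p i)" by (rule sum_mono)
  then show ?thesis using assms(3,5) by (simp add: sum_subtractf)
qed


context part begin

lemma atom_eq: "y \<in> atom s \<Longrightarrow> \<forall>i<N. s i < k i \<Longrightarrow> atom s = atom (S y)"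
proof -
  assume y: "y \<in> atom s" and s: "\<forall>i<N. s i < k i"
  have y0: "y \<in> X 0" using y unfolding atom_def by auto
  have sy: "sidx i y = s i" if "i < N" for i
    using sidx_uniq[OF y0 s[rule_format, OF that]] y that unfolding atom_def by auto
  have "z \<in> atom s \<longleftrightarrow> z \<in> atom (S y)" for z
  proof
    assume z: "z \<in> atom s"
    then have z0: "z \<in> X 0" unfolding atom_def by auto
    have "sidx i z = s i" if "i < N" for i
      using sidx_uniq[OF z0 s[rule_format, OF that]] z that unfolding atom_def by auto
    then have "S z = S y" using sy unfolding S_def by (auto intro!: restrict_ext)
    then show "z \<in> atom (S y)" using atom_S[OF y0] z0 by auto
  next
    assume z: "z \<in> atom (S y)"
    then have z0: "z \<in> X 0" and "S z = S y" using atom_S[OF y0] by auto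
    have zs: "sidx i z = s i" if "i < N" for i
    proof -
      have "S z i = S y i" using \<open>S z = S y\<close> by simp
      then show ?thesis using sy[OF that] that by (simp add: S_def)
    qed
    have "c i z \<in> P i (s i)" if "i < N" for i using sidx[OF z0, of i] zs[OF that] by simp
    then show "z \<in> atom s" unfolding atom_def using z0 by auto
  qed
  then show ?thesis by blast
qed

lemma atom_inj: "inj_on atom (S ` X 0)"
proof (rule inj_onI)
  fix s t assume "s \<in> S ` X 0" "t \<in> S ` X 0" "atom s = atom t"
  then obtain x y where xy: "x \<in> X 0" "y \<in> X 0" "s = S x" "t = S y" by auto
  then have "x \<in> atom (S x)" using atom_S by auto
  then have "x \<in> atom (S y)" using \<open>atom s = atom t\<close> xy by simp
  then show "s = t" using atom_S[OF xy(2)] xy by auto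
qed

abbreviation "pm A \<equiv> measure (\<mu> 0) A"

lemma entropy_eq:
  "partition_entropy (\<mu> 0) (join_partition X f k P N) = - (\<Sum>s\<in>S ` X 0. pm (atom s) * ln (pm (atom s)))"
proof -
  define J where "J = join_partition X f k P N"
  have J: "J = {atom s | s. \<forall>i<N. s i < k i}" unfolding J_def join_partition_def atom_def ..
  have sub1: "atom ` S ` X 0 \<subseteq> J" unfolding J using sidx by (auto simp: S_def)
  have sub2: "J \<subseteq> insert {} (atom ` S ` X 0)"
  proof
    fix A assume "A \<in> J"
    then obtain s where s: "A = atom s" "\<forall>i<N. s i < k i" unfolding J by auto
    show "A \<in> insert {} (atom ` S ` X 0)"
    proof (cases "A = {}")
      case False
      then obtain y where y: "y \<in> A" by auto
      then have "A = atom (S y)" using atom_eq s by auto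
      moreover have "y \<in> X 0" using y s unfolding atom_def by auto
      ultimately show ?thesis by auto
    qed simp
  qed
  have finJ: "finite J" using sub2 S_fin by (meson finite.insertI finite_imageI finite_subset)
  have "(\<Sum>A\<in>J. pm A * ln (pm A)) = (\<Sum>A\<in>atom ` S ` X 0. pm A * ln (pm A))"
    by (rule sum.mono_neutral_right[OF finJ sub1]) (use sub2 in auto)
  also have "\<dots> = (\<Sum>s\<in>S ` X 0. pm (atom s) * ln (pm (atom s)))"
    by (rule sum.reindex[OF atom_inj, unfolded comp_def])
  finally show ?thesis unfolding partition_entropy_def J_def by simp
qed

lemma spaceS: "space (\<mu> 0) = X 0" by (rule space_mu)

lemma S_meas: "v \<in> S ` space (\<mu> 0) \<Longrightarrow> S -` {v} \<inter> space (\<mu> 0) \<in> sets (\<mu> 0)"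
  using S_pre atom_sets spaceS by auto

lemma fvS: "integrable (\<mu> 0) (\<lambda>x. F (S x))"
  "integral\<^sup>L (\<mu> 0) (\<lambda>x. F (S x)) = (\<Sum>s\<in>S ` X 0. F s * pm (atom s))"
proof -
  have fin: "finite (S ` space (\<mu> 0))" using S_fin spaceS by simp
  note fv = fv_integral[OF prob fin S_meas, of F]
  show "integrable (\<mu> 0) (\<lambda>x. F (S x))" using fv(1) .
  show "integral\<^sup>L (\<mu> 0) (\<lambda>x. F (S x)) = (\<Sum>s\<in>S ` X 0. F s * pm (atom s))"
    using fv(2) spaceS S_pre by (auto intro!: sum.cong)
qed

lemma p_sum: "(\<Sum>s\<in>S ` X 0. pm (atom s)) = 1"
proof -
  have "integral\<^sup>L (\<mu> 0) (\<lambda>x. (\<lambda>_. 1::real) (S x)) = 1"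
    using prob_space.prob_space[OF prob[of 0]] by simp
  then show ?thesis using fvS(2)[of "\<lambda>_. 1"] by simp
qed

definition qq :: "nat \<Rightarrow> nat option \<Rightarrow> real" where
  "qq a ob = (case ob of None \<Rightarrow> 1 / real K | Some b \<Rightarrow> if a = b then 1 else 0)"
definition "w s = (\<Sum>t\<in>T. \<Prod>i<N. qq (s i) (t i)) / real (card T)"
definition "nN x = card {i\<in>{..<N}. tt x i = None}"

lemma qq_nonneg: "qq a ob \<ge> 0" unfolding qq_def by (auto split: option.splits)

lemma T_card: "card T \<ge> 1" using T_fin T_ne by (simp add: Suc_leI card_gt_0_iff)

lemma w_sum: "(\<Sum>s\<in>S ` X 0. w s) \<le> 1"
proof -
  define PE where "PE = PiE {..<N} (\<lambda>i. {..<k i})"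
  have SPE: "S ` X 0 \<subseteq> PE" unfolding PE_def
  proof
    fix s assume "s \<in> S ` X 0"
    then obtain x where x: "x \<in> X 0" "s = S x" by auto
    have "S x \<in> PiE {..<N} (\<lambda>i. {..<k i})" unfolding S_def
      by (rule restrict_PiE_iff[THEN iffD2]) (use sidx[OF x(1)] in auto)
    then show "s \<in> PiE {..<N} (\<lambda>i. {..<k i})" using x by simp
  qed
  have finPE: "finite PE" unfolding PE_def by (auto intro: finite_PiE)
  have inner: "(\<Sum>s\<in>S ` X 0. \<Prod>i<N. qq (s i) (t i)) \<le> 1" if t: "t \<in> T" for t
  proof -
    obtain x where x: "x \<in> X 0" "t = tt x" using t unfolding T_def by auto
    have "(\<Sum>s\<in>S ` X 0. \<Prod>i<N. qq (s i) (t i)) \<le> (\<Sum>s\<in>PE. \<Prod>i<N. qq (s i) (t i))"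
      by (rule sum_mono2[OF finPE SPE]) (auto intro: prod_nonneg qq_nonneg)
    also have "\<dots> = (\<Prod>i<N. \<Sum>a<k i. qq a (t i))"
      unfolding PE_def by (rule prod_sum_PiE[symmetric]) auto
    also have "\<dots> \<le> 1"
    proof (rule prod_le_1)
      fix i assume i: "i \<in> {..<N}"
      have "0 \<le> (\<Sum>a<k i. qq a (t i))" by (rule sum_nonneg) (rule qq_nonneg)
      moreover have "(\<Sum>a<k i. qq a (t i)) \<le> 1"
      proof (cases "t i")
        case None
        then have "(\<Sum>a<k i. qq a (t i)) = real (k i) / real K" by (simp add: qq_def)
        also have "\<dots> \<le> 1" using kK[of i] K1 by simp
        finally show ?thesis .
      next
        case (Some b)
        then have b: "b < k i" using x i sidx[OF x(1), of i] unfolding tt_def by (auto split: if_splits)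
        have "(\<Sum>a<k i. qq a (t i)) = (\<Sum>a<k i. if a = b then 1 else 0)" using Some by (simp add: qq_def)
        also have "\<dots> = 1" using b by simp
        finally show ?thesis by simp
      qed
      ultimately show "0 \<le> (\<Sum>a<k i. qq a (t i)) \<and> (\<Sum>a<k i. qq a (t i)) \<le> 1" by simp
    qed
    finally show ?thesis .
  qed
  have "(\<Sum>s\<in>S ` X 0. w s) = (\<Sum>t\<in>T. \<Sum>s\<in>S ` X 0. \<Prod>i<N. qq (s i) (t i)) / real (card T)"
    unfolding w_def by (simp add: sum_divide_distrib[symmetric] sum.swap[of _ T])
  also have "\<dots> \<le> (\<Sum>t\<in>T. (1::real)) / real (card T)"
    using T_card by (intro divide_right_mono sum_mono inner) auto
  also have "\<dots> = 1" using T_card by simp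
  finally show ?thesis .
qed

lemma w_lower: "x \<in> X 0 \<Longrightarrow> w (S x) \<ge> (1 / real K) ^ nN x / real (card T)"
proof -
  assume x: "x \<in> X 0"
  have "(\<Prod>i<N. qq (S x i) (tt x i)) = (\<Prod>i<N. if tt x i = None then 1 / real K else 1)"
    by (rule prod.cong) (auto simp: qq_def S_def tt_def)
  also have "\<dots> = (1 / real K) ^ nN x"
    unfolding nN_def by (simp add: prod.If_cases Int_def)
  finally have eq: "(\<Prod>i<N. qq (S x i) (tt x i)) = (1 / real K) ^ nN x" .
  have "(\<Prod>i<N. qq (S x i) (tt x i)) \<le> (\<Sum>t\<in>T. \<Prod>i<N. qq (S x i) (t i))"
    by (rule member_le_sum) (use x T_fin in \<open>auto simp: T_def intro: prod_nonneg qq_nonneg\<close>)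
  then show ?thesis unfolding w_def using eq T_card by (simp add: divide_right_mono)
qed

lemma w_pos: "x \<in> X 0 \<Longrightarrow> w (S x) > 0"
proof -
  assume x: "x \<in> X 0"
  have "(1 / real K) ^ nN x / real (card T) > 0" using K1 T_card by simp
  then show ?thesis using w_lower[OF x] by linarith
qed

lemma H_le_int: "partition_entropy (\<mu> 0) (join_partition X f k P N) \<le> integral\<^sup>L (\<mu> 0) (\<lambda>x. - ln (w (S x)))"
proof -
  have "- (\<Sum>s\<in>S ` X 0. pm (atom s) * ln (pm (atom s))) \<le> - (\<Sum>s\<in>S ` X 0. pm (atom s) * ln (w s))"
    by (rule gibbs[OF S_fin _ p_sum _ w_sum]) (auto intro: w_pos)
  also have "\<dots> = (\<Sum>s\<in>S ` X 0. (- ln (w s)) * pm (atom s))"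
    by (simp add: sum_negf[symmetric] mult.commute)
  also have "\<dots> = integral\<^sup>L (\<mu> 0) (\<lambda>x. - ln (w (S x)))" using fvS(2)[of "\<lambda>s. - ln (w s)"] by simp
  finally show ?thesis using entropy_eq by simp
qed

lemma pointwise: "x \<in> X 0 \<Longrightarrow> - ln (w (S x)) \<le> ln (real (card T)) + real (nN x) * ln (real K)"
proof -
  assume x: "x \<in> X 0"
  have pos: "(1 / real K) ^ nN x / real (card T) > 0" using K1 T_card by simp
  have "ln ((1 / real K) ^ nN x / real (card T)) \<le> ln (w (S x))"
    using w_lower[OF x] pos by (subst ln_le_cancel_iff) auto
  moreover have "ln ((1 / real K) ^ nN x / real (card T)) = - (real (nN x) * ln (real K)) - ln (real (card T))"
    using K1 T_card by (simp add: ln_div ln_realpow)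
  ultimately show ?thesis by linarith
qed

end


context part begin

definition "NG i = {x \<in> X 0. \<not> good i x}"
definition "Bad i = {x \<in> X 0. tt x i = None}"
definition "blk i = {i'. i' < N \<and> i' div m = i div m}"

lemma NG_eq: "NG i = c i -` (X i - (\<Union>a<k i. C i a)) \<inter> X 0"
  unfolding NG_def good_def using c_in by auto

lemma XC_sets: "X i - (\<Union>a<k i. C i a) \<in> sets (\<mu> i)"
proof -
  have "(\<Union>a\<in>{..<k i}. C i a) \<in> sets (\<mu> i)" by (rule sets.finite_UN) (auto intro: C_sets)
  then show ?thesis using sets.top[of "\<mu> i"] space_mu by (metis sets.Diff)
qed

lemma NG_sets: "NG i \<in> sets (\<mu> 0)"
  unfolding NG_eq using measurable_sets[OF c_meas XC_sets] space_mu by simp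

lemma NG_meas: "pm (NG i) \<le> real K * \<epsilon>"
proof -
  interpret pi: prob_space "\<mu> i" by (rule prob)
  have "pm (NG i) = measure (\<mu> i) (X i - (\<Union>a<k i. C i a))" unfolding NG_eq by (rule c_inv[OF XC_sets])
  also have "\<dots> \<le> measure (\<mu> i) (\<Union>a<k i. P i a - C i a)"
  proof (rule pi.finite_measure_mono)
    show "X i - (\<Union>a<k i. C i a) \<subseteq> (\<Union>a<k i. P i a - C i a)" using P_cover[of i] by blast
    show "(\<Union>a<k i. P i a - C i a) \<in> sets (\<mu> i)" by (rule sets.finite_UN) (auto intro: P_sets C_sets)
  qed
  also have "\<dots> \<le> (\<Sum>a<k i. measure (\<mu> i) (P i a - C i a))"
    by (rule measure_UNION_le) (auto intro: P_sets C_sets)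
  also have "\<dots> \<le> (\<Sum>a<k i. \<epsilon>)" by (rule sum_mono) (rule Cmeas, simp)
  also have "\<dots> = real (k i) * \<epsilon>" by simp
  also have "\<dots> \<le> real K * \<epsilon>" using kK[of i] epos by (simp add: mult_right_mono)
  finally show ?thesis .
qed

lemma Bad_eq: "i < N \<Longrightarrow> Bad i = (\<Union>i'\<in>blk i. NG i')"
  unfolding Bad_def NG_def blk_def tt_def bgood_def by auto

lemma blk_card: "card (blk i) \<le> m"
proof -
  have "blk i \<subseteq> {(i div m) * m ..< (i div m) * m + m}"
  proof
    fix i' assume "i' \<in> blk i"
    then have e: "i' div m = i div m" unfolding blk_def by auto
    have a: "i div m * m + i' mod m = i'" using e by (metis div_mult_mod_eq)
    have r: "i' mod m < m" using m1 by simp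
    show "i' \<in> {(i div m) * m ..< (i div m) * m + m}" unfolding atLeastLessThan_iff using a r by linarith
  qed
  then show ?thesis by (metis card_atLeastLessThan card_mono diff_add_inverse finite_atLeastLessThan)
qed

lemma blk_fin: "finite (blk i)" unfolding blk_def by auto

lemma Bad_sets: "i < N \<Longrightarrow> Bad i \<in> sets (\<mu> 0)"
  using Bad_eq blk_fin NG_sets by (metis sets.finite_UN)

lemma Bad_meas: "i < N \<Longrightarrow> pm (Bad i) \<le> real m * real K * \<epsilon>"
proof -
  assume i: "i < N"
  have "pm (Bad i) \<le> (\<Sum>i'\<in>blk i. pm (NG i'))" unfolding Bad_eq[OF i]
    by (rule measure_UNION_le[OF blk_fin]) (rule NG_sets)
  also have "\<dots> \<le> (\<Sum>i'\<in>blk i. real K * \<epsilon>)" by (rule sum_mono) (rule NG_meas)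
  also have "\<dots> = real (card (blk i)) * (real K * \<epsilon>)" by simp
  also have "\<dots> \<le> real m * (real K * \<epsilon>)" using blk_card[of i] epos by (intro mult_right_mono) auto
  finally show ?thesis by simp
qed

lemma nN_sum: "x \<in> X 0 \<Longrightarrow> real (nN x) = (\<Sum>i<N. indicator (Bad i) x)"
proof -
  assume x: "x \<in> X 0"
  have "real (nN x) = (\<Sum>i\<in>{i\<in>{..<N}. tt x i = None}. 1)" unfolding nN_def by simp
  also have "\<dots> = (\<Sum>i<N. if tt x i = None then 1 else 0)" by (rule sum.inter_filter) simp
  also have "\<dots> = (\<Sum>i<N. indicator (Bad i) x)" by (rule sum.cong) (use x in \<open>auto simp: Bad_def indicator_def\<close>)
  finally show ?thesis .
qed

lemma int_bound: "integral\<^sup>L (\<mu> 0) (\<lambda>x. - ln (w (S x))) \<le> ln (real (card T)) + ln (real K) * (\<Sum>i<N. pm (Bad i))"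
proof -
  interpret p0: prob_space "\<mu> 0" by (rule prob)
  have ii: "integrable (\<mu> 0) (indicator (Bad i) :: 'a \<Rightarrow> real)" if "i < N" for i
    using Bad_sets[OF that] by (intro integrable_real_indicator) (auto simp: p0.emeasure_finite less_top[symmetric])
  define g where "g x = ln (real (card T)) + ln (real K) * (\<Sum>i<N. indicator (Bad i) x :: real)" for x
  have gi: "integrable (\<mu> 0) g" unfolding g_def using ii
    by (intro Bochner_Integration.integrable_add integrable_mult_right Bochner_Integration.integrable_sum) auto
  have "integral\<^sup>L (\<mu> 0) (\<lambda>x. - ln (w (S x))) \<le> integral\<^sup>L (\<mu> 0) g"
  proof (rule Bochner_Integration.integral_mono[OF fvS(1) gi])
    fix x assume "x \<in> space (\<mu> 0)"
    then have x: "x \<in> X 0" using space_mu by simp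
    show "- ln (w (S x)) \<le> g x" unfolding g_def using pointwise[OF x] nN_sum[OF x] by (simp add: mult.commute)
  qed
  also have "integral\<^sup>L (\<mu> 0) g = ln (real (card T)) + ln (real K) * (\<Sum>i<N. pm (Bad i))"
    unfolding g_def using ii p0.prob_space Bad_sets
    by (subst Bochner_Integration.integral_add) (auto simp: Bochner_Integration.integral_sum Int_absorb2 sets.sets_into_space)
  finally show ?thesis .
qed

end


context part begin

lemma tt_eq:
  assumes x: "x \<in> X 0" and y: "y \<in> X 0" and e: "e \<in> X 0"
    and cx: "\<forall>i<N. d i (c i x) (c i e) \<le> \<delta>/3" and cy: "\<forall>i<N. d i (c i y) (c i e) \<le> \<delta>/3"
    and bg: "\<forall>i<N. bgood (i div m) x \<longleftrightarrow> bgood (i div m) y"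
  shows "tt x = tt y"
  unfolding tt_def
proof (rule restrict_ext)
  fix i assume i: "i \<in> {..<N}"
  show "(if bgood (i div m) x then Some (sidx i x) else None) = (if bgood (i div m) y then Some (sidx i y) else None)"
  proof (cases "bgood (i div m) x")
    case True
    then have by': "bgood (i div m) y" using bg i by auto
    have "good i x" "good i y" using True by' i unfolding bgood_def by auto
    then obtain a b where ab: "a < k i" "c i x \<in> C i a" "b < k i" "c i y \<in> C i b" unfolding good_def by auto
    have "d i (c i x) (c i y) \<le> d i (c i x) (c i e) + d i (c i e) (c i y)"
      using dtri c_in x y e by blast
    also have "\<dots> \<le> 2 * \<delta> / 3"
    proof -
      have "d i (c i x) (c i e) \<le> \<delta>/3" "d i (c i y) (c i e) \<le> \<delta>/3" using cx cy i by auto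
      then show ?thesis using dsym[OF c_in[OF e] c_in[OF y], of i] by linarith
    qed
    also have "\<dots> < \<delta>" using dpos by simp
    finally have "a = b" using Csep[OF ab(1) ab(3) _ ab(2) ab(4)] by force
    then have "sidx i x = a" "sidx i y = a" using sidx_uniq x y ab Csub by blast+
    then show ?thesis using True by' by simp
  next
    case False
    then have "\<not> bgood (i div m) y" using bg i by auto
    then show ?thesis using False by simp
  qed
qed

lemma T_count: "real (card T) \<le> real (r_sep X d f N (\<delta>/3)) * 2 ^ (N div m + 1)"
proof -
  obtain E where E: "finite E" "separated_set X d f N (\<delta>/3) E" "card E = r_sep X d f N (\<delta>/3)"
    "\<forall>x\<in>X 0. \<exists>e\<in>E. \<forall>i<N. d i (c i x) (c i e) \<le> \<delta>/3"
    using rsep_max[OF N1, of "\<delta>/3"] dpos by auto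
  have EX: "E \<subseteq> X 0" using E(2) unfolding separated_set_def by auto
  define ee where "ee x = (SOME e. e \<in> E \<and> (\<forall>i<N. d i (c i x) (c i e) \<le> \<delta>/3))" for x
  have ee: "ee x \<in> E \<and> (\<forall>i<N. d i (c i x) (c i (ee x)) \<le> \<delta>/3)" if "x \<in> X 0" for x
    unfolding ee_def by (rule someI_ex) (use E(4) that in blast)
  define xt where "xt t = (SOME x. x \<in> X 0 \<and> tt x = t)" for t
  have xt: "xt t \<in> X 0 \<and> tt (xt t) = t" if "t \<in> T" for t
    unfolding xt_def by (rule someI_ex) (use that in \<open>auto simp: T_def\<close>)
  define BL where "BL = (\<lambda>i. i div m) ` {..<N}"
  define \<phi> where "\<phi> t = (ee (xt t), {j\<in>BL. bgood j (xt t)})" for t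
  have inj: "inj_on \<phi> T"
  proof (rule inj_onI)
    fix t1 t2 assume t: "t1 \<in> T" "t2 \<in> T" "\<phi> t1 = \<phi> t2"
    then have e: "ee (xt t1) = ee (xt t2)" and b: "{j\<in>BL. bgood j (xt t1)} = {j\<in>BL. bgood j (xt t2)}"
      unfolding \<phi>_def by auto
    have bg: "\<forall>i<N. bgood (i div m) (xt t1) \<longleftrightarrow> bgood (i div m) (xt t2)"
    proof (intro allI impI)
      fix i assume "i < N"
      then have "i div m \<in> BL" unfolding BL_def by auto
      then show "bgood (i div m) (xt t1) \<longleftrightarrow> bgood (i div m) (xt t2)" using b by blast
    qed
    have "tt (xt t1) = tt (xt t2)"
      by (rule tt_eq[of _ _ "ee (xt t1)"]) (use xt[OF t(1)] xt[OF t(2)] ee[of "xt t1"] ee[of "xt t2"] e EX bg in auto)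
    then show "t1 = t2" using xt t by metis
  qed
  have sub: "\<phi> ` T \<subseteq> E \<times> Pow BL" unfolding \<phi>_def using xt ee by auto
  have finBL: "finite BL" unfolding BL_def by auto
  have "card T = card (\<phi> ` T)" using card_image[OF inj] by simp
  also have "\<dots> \<le> card (E \<times> Pow BL)" by (rule card_mono) (use E(1) finBL sub in auto)
  also have "\<dots> = card E * 2 ^ card BL" using finBL by (simp add: card_cartesian_product card_Pow)
  finally have c1: "card T \<le> card E * 2 ^ card BL" .
  have "BL \<subseteq> {..N div m}" unfolding BL_def by (auto intro: div_le_mono)
  then have "card BL \<le> N div m + 1" using card_mono[of "{..N div m}" BL] by simp
  then have "(2::nat) ^ card BL \<le> 2 ^ (N div m + 1)" by (rule power_increasing) simp
  then have "card T \<le> card E * 2 ^ (N div m + 1)" using c1 by (meson le_trans mult_le_mono2)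
  then have "real (card T) \<le> real (card E * 2 ^ (N div m + 1))" by linarith
  then show ?thesis using E(3) by simp
qed

lemma main_bound:
  "partition_entropy (\<mu> 0) (join_partition X f k P N)
    \<le> ln (real (r_sep X d f N (\<delta>/3))) + real (N div m + 1) * ln 2 + real N * (real m * real K * \<epsilon>) * ln (real K)"
proof -
  have r1: "real (r_sep X d f N (\<delta>/3)) \<ge> 1" using rsep_pos[OF N1, of "\<delta>/3"] dpos by simp
  have "ln (real (card T)) \<le> ln (real (r_sep X d f N (\<delta>/3)) * 2 ^ (N div m + 1))"
    using T_count T_card r1 by (subst ln_le_cancel_iff) auto
  also have "\<dots> = ln (real (r_sep X d f N (\<delta>/3))) + real (N div m + 1) * ln 2"
    using r1 by (simp add: ln_mult ln_realpow algebra_simps)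
  finally have l1: "ln (real (card T)) \<le> ln (real (r_sep X d f N (\<delta>/3))) + real (N div m + 1) * ln 2" .
  have "(\<Sum>i<N. pm (Bad i)) \<le> (\<Sum>i<N. real m * real K * \<epsilon>)" by (rule sum_mono) (rule Bad_meas, simp)
  then have "ln (real K) * (\<Sum>i<N. pm (Bad i)) \<le> ln (real K) * (\<Sum>i<N. real m * real K * \<epsilon>)"
    using K1 by (intro mult_left_mono) auto
  then have l2: "ln (real K) * (\<Sum>i<N. pm (Bad i)) \<le> real N * (real m * real K * \<epsilon>) * ln (real K)" by (simp add: mult.commute)
  show ?thesis using H_le_int int_bound l1 l2 by linarith
qed

end


lemma entropy_le_top:
  assumes tn: "tnds X d f" and inv: "invariant_measures X d f \<mu>"
    and kP: "(k, P) \<in> misiurewicz_class X d \<mu>"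
  shows "metric_entropy_part X f \<mu> k P \<le> top_entropy X d f"
proof -
  interpret sys X d f \<mu> using tn inv by unfold_locales
  have bp: "borel_partition_seq X d k P" and "\<exists>K. \<forall>n. k n \<le> K"
    and cls: "\<And>\<epsilon>. \<epsilon> > 0 \<Longrightarrow> \<exists>\<delta>>0. \<exists>C. \<forall>n. \<forall>i<k n.
          C n i \<subseteq> P n i \<and> compactin (Metric_space.mtopology (X n) (d n)) (C n i)
        \<and> measure (\<mu> n) (P n i - C n i) \<le> \<epsilon>
        \<and> (\<forall>j<k n. i \<noteq> j \<longrightarrow> (\<forall>x\<in>C n i. \<forall>y\<in>C n j. d n x y \<ge> \<delta>))"
    using kP unfolding misiurewicz_class_def by auto
  then obtain K0 where K0: "\<And>n. k n \<le> K0" by auto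
  define K where "K = max K0 1"
  have kK: "\<And>n. k n \<le> K" and K1: "K \<ge> 1" unfolding K_def using K0 by (auto simp: le_max_iff_disj)
  define L where "L = ln (real K)"
  have L0: "L \<ge> 0" unfolding L_def using K1 by simp
  show ?thesis
  proof (rule ereal_le_epsilon2)
    fix r :: real assume r: "r > 0"
    obtain n :: nat where n: "2 * ln 2 / r < real n" using reals_Archimedean2 by blast
    define m where "m = n + 1"
    have m1: "m \<ge> 1" unfolding m_def by simp
    have "2 * ln 2 / r < real m" using n unfolding m_def by simp
    then have "2 * ln 2 < real m * r" using r by (simp add: divide_less_eq)
    then have lm: "ln 2 / real m < r / 2" using m1 by (simp add: divide_less_eq mult.commute)
    define B where "B = real m * real K * L"
    have B0: "B \<ge> 0" unfolding B_def using L0 by simp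
    define \<epsilon> where "\<epsilon> = r / (2 * (B + 1))"
    have epos: "\<epsilon> > 0" unfolding \<epsilon>_def using r B0 by simp
    have "B * \<epsilon> = (r / 2) * (B / (B + 1))" unfolding \<epsilon>_def using B0 by (simp add: field_simps)
    also have "\<dots> < r / 2" using r B0 by (simp add: divide_less_eq)
    finally have lB: "real m * real K * \<epsilon> * L < r / 2" unfolding B_def by (simp add: algebra_simps)
    obtain \<delta> C where dpos: "\<delta> > 0" and Cp: "\<forall>n. \<forall>i<k n.
          C n i \<subseteq> P n i \<and> compactin (Metric_space.mtopology (X n) (d n)) (C n i)
        \<and> measure (\<mu> n) (P n i - C n i) \<le> \<epsilon>
        \<and> (\<forall>j<k n. i \<noteq> j \<longrightarrow> (\<forall>x\<in>C n i. \<forall>y\<in>C n j. d n x y \<ge> \<delta>))"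
      using cls[OF epos] by blast
    have pt: "part X d f \<mu> k P K \<epsilon> \<delta> C m N" if "N \<ge> 1" for N
      unfolding part_def part_axioms_def
      using tn inv bp kK K1 epos dpos Cp m1 that by (auto simp: sys_def)
    define A where "A = ln 2 / real m + real m * real K * \<epsilon> * L"
    have trm: "ereal (partition_entropy (\<mu> 0) (join_partition X f k P N) / real N)
        \<le> ereal (ln (real (r_sep X d f N (\<delta>/3))) / real N) + ereal (A + ln 2 / real N)" for N
    proof (cases "N = 0")
      case True
      then show ?thesis unfolding A_def using L0 epos m1 by simp
    next
      case False
      then have N1: "N \<ge> 1" by simp
      have mb: "partition_entropy (\<mu> 0) (join_partition X f k P N)
          \<le> ln (real (r_sep X d f N (\<delta>/3))) + real (N div m + 1) * ln 2 + real N * (real m * real K * \<epsilon>) * L"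
        using part.main_bound[OF pt[OF N1]] unfolding L_def .
      have "real (N div m) * real m \<le> real N"
        by (metis div_times_less_eq_dividend of_nat_le_iff of_nat_mult)
      then have dm: "real (N div m) / real N \<le> 1 / real m" using m1 N1 by (simp add: field_simps)
      have "partition_entropy (\<mu> 0) (join_partition X f k P N) / real N
          \<le> (ln (real (r_sep X d f N (\<delta>/3))) + real (N div m + 1) * ln 2 + real N * (real m * real K * \<epsilon>) * L) / real N"
        using mb N1 by (simp add: divide_right_mono)
      also have "\<dots> = ln (real (r_sep X d f N (\<delta>/3))) / real N + (real (N div m) / real N) * ln 2 + ln 2 / real N
          + real m * real K * \<epsilon> * L"
        using N1 by (simp add: field_simps)
      also have "\<dots> \<le> ln (real (r_sep X d f N (\<delta>/3))) / real N + (1 / real m) * ln 2 + ln 2 / real N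
          + real m * real K * \<epsilon> * L"
        using dm epos L0 by (intro add_mono mult_right_mono) auto
      finally show ?thesis unfolding A_def by simp
    qed
    have lim: "(\<lambda>N. ereal (A + ln 2 / real N)) \<longlonglongrightarrow> ereal A"
      by (intro tendsto_intros lim_const_over_n[THEN tendsto_add[OF tendsto_const], simplified])
    have "metric_entropy_part X f \<mu> k P
        \<le> limsup (\<lambda>N. ereal (ln (real (r_sep X d f N (\<delta>/3))) / real N) + ereal (A + ln 2 / real N))"
      unfolding metric_entropy_part_def by (rule Limsup_mono) (use trm in auto)
    also have "\<dots> \<le> gg (\<delta>/3) + limsup (\<lambda>N. ereal (A + ln 2 / real N))"
      unfolding gg_def by (rule ereal_limsup_add_mono)
    also have "limsup (\<lambda>N. ereal (A + ln 2 / real N)) = ereal A" by (rule lim_imp_Limsup[OF _ lim]) simp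
    also have "gg (\<delta>/3) + ereal A \<le> top_entropy X d f + ereal A" by (rule add_right_mono, rule gg_le_top) (use dpos in simp)
    also have "\<dots> \<le> top_entropy X d f + ereal r"
    proof -
      have "A \<le> r" using lm lB unfolding A_def by linarith
      then show ?thesis by (intro add_left_mono) simp
    qed
    finally show "metric_entropy_part X f \<mu> k P \<le> top_entropy X d f + ereal r" .
  qed
qed

theorem mainTheorem1:
  fixes X :: "nat \<Rightarrow> 'a set" and d :: "nat \<Rightarrow> 'a \<Rightarrow> 'a \<Rightarrow> real"
    and f :: "nat \<Rightarrow> 'a \<Rightarrow> 'a" and \<mu> :: "nat \<Rightarrow> 'a measure"
  assumes "tnds X d f"
    and "equicontinuous_nds X d f"
    and "invariant_measures X d f \<mu>"
  shows "class_entropy X f \<mu> (misiurewicz_class X d \<mu>) \<le> top_entropy X d f"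
  unfolding class_entropy_def
proof (rule SUP_least)
  fix kP assume "kP \<in> misiurewicz_class X d \<mu>"
  then obtain k P where "kP = (k, P)" "(k, P) \<in> misiurewicz_class X d \<mu>" by (cases kP) auto
  then show "(case kP of (k, P) \<Rightarrow> metric_entropy_part X f \<mu> k P) \<le> top_entropy X d f"
    using entropy_le_top[OF assms(1,3)] by simp
qed


end
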